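(* Let $(X,Y)\sim p_{XY}$ be jointly distributed finite-valued random variables. Then $p_{XY}$ is saturable, i.e. $I(X;Y|Q_* )=0$, iff there exists a conditional pmf $p_{Q|XY}$ (with $Q$ finite-valued) such that $X-Q-Y$, $Q-X-Y$ and $Q-Y-X$ are all Markov chains.
   Context: For finite-valued random variables, $A-B-C$ means that $A$ and $C$ are conditionally independent given $B$. $Q_*$ is the maximal common random variable of $X$ and $Y$: consider the bipartite graph on vertex set $\mathcal{X}\cup\mathcal{Y}$ (disjoint union of the alphabets) with an edge between $x$ and $y$ iff $p_{XY}(x,y)>0$, and let $Q_*$ be the index of the connected component containing the realized pair $(X,Y)$. *)

theory Defs
  imports Complex_Main
begin

text \<open>A joint pmf of finitely many triples is given as a nonnegative function
  f :: 'a => 'b => 'c => real supported on finite sets A, B, C.\<close>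

definition is_pmf :: "('a \<times> 'b \<Rightarrow> real) \<Rightarrow> bool" where
  "is_pmf p \<longleftrightarrow> (\<forall>z. p z \<ge> 0) \<and> (\<Sum>z\<in>UNIV. p z) = 1"

text \<open>Markov chain A - B - C (conditional independence of A and C given B),
  for a joint pmf f a b c on A x B x C:  p(a,b,c) p(b) = p(a,b) p(b,c).\<close>
definition markov_chain ::
  "'a set \<Rightarrow> 'b set \<Rightarrow> 'c set \<Rightarrow> ('a \<Rightarrow> 'b \<Rightarrow> 'c \<Rightarrow> real) \<Rightarrow> bool" where
  "markov_chain A B C f \<longleftrightarrow>
     (\<forall>a\<in>A. \<forall>b\<in>B. \<forall>c\<in>C.
        f a b c * (\<Sum>a'\<in>A. \<Sum>c'\<in>C. f a' b c') =
        (\<Sum>c'\<in>C. f a b c') * (\<Sum>a'\<in>A. f a' b c))"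

definition cond_mutual_info ::
  "'a set \<Rightarrow> 'b set \<Rightarrow> 'c set \<Rightarrow> ('a \<Rightarrow> 'b \<Rightarrow> 'c \<Rightarrow> real) \<Rightarrow> real" where
  "cond_mutual_info A B C f =
     (\<Sum>a\<in>A. \<Sum>b\<in>B. \<Sum>c\<in>C.
        if f a b c > 0 then
          f a b c * ln (f a b c * (\<Sum>a'\<in>A. \<Sum>b'\<in>B. f a' b' c) /
                        ((\<Sum>b'\<in>B. f a b' c) * (\<Sum>a'\<in>A. f a' b c)))
        else 0)"

definition bip_edges :: "('x \<times> 'y \<Rightarrow> real) \<Rightarrow> (('x + 'y) \<times> ('x + 'y)) set" where
  "bip_edges p = {(Inl x, Inr y) | x y. p (x, y) > 0} \<union> {(Inr y, Inl x) | x y. p (x, y) > 0}"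

definition component :: "('x \<times> 'y \<Rightarrow> real) \<Rightarrow> ('x + 'y) \<Rightarrow> ('x + 'y) set" where
  "component p v = {w. (v, w) \<in> (bip_edges p)\<^sup>*}"

text \<open>Maximal common random variable: Q_* = the component containing the realized
  pair (X,Y); for p(x,y) > 0 this is the component of Inl x (= that of Inr y).\<close>
definition Qstar :: "('x \<times> 'y \<Rightarrow> real) \<Rightarrow> 'x \<Rightarrow> 'y \<Rightarrow> ('x + 'y) set" where
  "Qstar p x y = component p (Inl x)"

definition joint_Qstar :: "('x \<times> 'y \<Rightarrow> real) \<Rightarrow> 'x \<Rightarrow> 'y \<Rightarrow> ('x + 'y) set \<Rightarrow> real" where
  "joint_Qstar p x y c = (if c = Qstar p x y then p (x, y) else 0)"

definition saturable :: "('x::finite \<times> 'y::finite \<Rightarrow> real) \<Rightarrow> bool" where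
  "saturable p \<longleftrightarrow> cond_mutual_info UNIV UNIV UNIV (joint_Qstar p) = 0"

end

theory Submission
  imports Defs
begin


lemma cmi_zero_if:
  fixes f :: "'a::finite \<Rightarrow> 'b::finite \<Rightarrow> 'c::finite \<Rightarrow> real"
  assumes "\<And>a b c. f a b c > 0 \<Longrightarrow>
     f a b c * (\<Sum>a'\<in>UNIV. \<Sum>b'\<in>UNIV. f a' b' c) = (\<Sum>b'\<in>UNIV. f a b' c) * (\<Sum>a'\<in>UNIV. f a' b c)"
  shows "cond_mutual_info UNIV UNIV UNIV f = 0"
  unfolding cond_mutual_info_def
proof (intro sum.neutral ballI)
  fix a b c
  show "(if f a b c > 0 then f a b c * ln (f a b c * (\<Sum>a'\<in>UNIV. \<Sum>b'\<in>UNIV. f a' b' c) /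
                        ((\<Sum>b'\<in>UNIV. f a b' c) * (\<Sum>a'\<in>UNIV. f a' b c))) else 0) = 0"
  proof (cases "f a b c > 0")
    case True
    then show ?thesis using assms[OF True]
      by (cases "(\<Sum>b'\<in>UNIV. f a b' c) * (\<Sum>a'\<in>UNIV. f a' b c) = 0") auto
  qed simp
qed

lemma cmi_zero_imp:
  fixes f :: "'a::finite \<Rightarrow> 'b::finite \<Rightarrow> 'c::finite \<Rightarrow> real"
  assumes nn: "\<And>a b c. f a b c \<ge> 0"
    and I: "cond_mutual_info UNIV UNIV UNIV f = 0"
  shows "f a b c * (\<Sum>a'\<in>UNIV. \<Sum>b'\<in>UNIV. f a' b' c) = (\<Sum>b'\<in>UNIV. f a b' c) * (\<Sum>a'\<in>UNIV. f a' b c)"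
proof -
  define fC where "fC c = (\<Sum>a'\<in>UNIV. \<Sum>b'\<in>UNIV. f a' b' c)" for c
  define fA where "fA a c = (\<Sum>b'\<in>UNIV. f a b' c)" for a c
  define fB where "fB b c = (\<Sum>a'\<in>UNIV. f a' b c)" for b c
  have fA_ge: "fA a c \<ge> f a b c" for a b c
    unfolding fA_def by (rule member_le_sum) (auto simp: nn)
  have fB_ge: "fB b c \<ge> f a b c" for a b c
    unfolding fB_def by (rule member_le_sum[where f="\<lambda>a'. f a' b c"]) (auto simp: nn)
  have fC_ge: "fC c \<ge> fA a c" for a c
    unfolding fC_def fA_def by (rule member_le_sum) (auto simp: nn sum_nonneg)
  have fB_nn: "fB b c \<ge> 0" for b c unfolding fB_def by (simp add: nn sum_nonneg)
  have fA_nn: "fA a c \<ge> 0" for a c unfolding fA_def by (simp add: nn sum_nonneg)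
  define t where "t a b c = fA a c * fB b c / (f a b c * fC c)" for a b c
  define u where "u a b c = fA a c * fB b c / fC c" for a b c
  define K where "K a b c = (if f a b c > 0 then f a b c * ln (t a b c) else 0)" for a b c
  define d where "d a b c = (u a b c - f a b c) - K a b c" for a b c
  have tpos: "t a b c > 0" if "f a b c > 0" for a b c
  proof -
    have "fA a c > 0" "fB b c > 0" "fC c > 0"
      using that fA_ge[where a=a and b=b and c=c] fB_ge[where a=a and b=b and c=c] fC_ge[where a=a and c=c] by linarith+
    then show ?thesis unfolding t_def using that by simp
  qed
  have ft: "f a b c * t a b c = u a b c" if "f a b c > 0" for a b c
    unfolding t_def u_def using that by simp
  have lnt: "ln (f a b c * fC c / (fA a c * fB b c)) = - ln (t a b c)" if "f a b c > 0" for a b c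
  proof -
    have "f a b c * fC c / (fA a c * fB b c) = inverse (t a b c)" unfolding t_def by simp
    then show ?thesis using tpos[OF that] by (simp add: ln_inverse)
  qed
  have IK: "cond_mutual_info UNIV UNIV UNIV f = - (\<Sum>a\<in>UNIV. \<Sum>b\<in>UNIV. \<Sum>c\<in>UNIV. K a b c)"
    unfolding cond_mutual_info_def
    apply (simp add: sum_negf[symmetric])
    apply (intro sum.cong refl)
    subgoal for a b c
      using lnt[where a=a and b=b and c=c] unfolding K_def fA_def fB_def fC_def
      by auto
    done
  have swap3: "(\<Sum>a\<in>UNIV. \<Sum>b\<in>UNIV. \<Sum>c\<in>UNIV. g a b c) = (\<Sum>c\<in>UNIV. \<Sum>a\<in>UNIV. \<Sum>b\<in>UNIV. g a b c)"
    for g :: "'a \<Rightarrow> 'b \<Rightarrow> 'c \<Rightarrow> real"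
  proof -
    have "(\<Sum>a\<in>UNIV. \<Sum>b\<in>UNIV. \<Sum>c\<in>UNIV. g a b c) = (\<Sum>a\<in>UNIV. \<Sum>c\<in>UNIV. \<Sum>b\<in>UNIV. g a b c)"
      by (rule sum.cong[OF refl], rule sum.swap)
    also have "\<dots> = (\<Sum>c\<in>UNIV. \<Sum>a\<in>UNIV. \<Sum>b\<in>UNIV. g a b c)" by (rule sum.swap)
    finally show ?thesis .
  qed
  have sA: "(\<Sum>a\<in>UNIV. fA a c) = fC c" for c unfolding fA_def fC_def by simp
  have sB: "(\<Sum>b\<in>UNIV. fB b c) = fC c" for c unfolding fB_def fC_def by (rule sum.swap)
  have sumu: "(\<Sum>a\<in>UNIV. \<Sum>b\<in>UNIV. \<Sum>c\<in>UNIV. u a b c) = (\<Sum>c\<in>UNIV. fC c)"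
  proof -
    have "(\<Sum>a\<in>UNIV. \<Sum>b\<in>UNIV. u a b c) = fC c" for c
    proof -
      have "(\<Sum>a\<in>UNIV. \<Sum>b\<in>UNIV. u a b c) = (\<Sum>a\<in>UNIV. fA a c) * (\<Sum>b\<in>UNIV. fB b c) / fC c"
        unfolding u_def
      proof -
        have "(\<Sum>a\<in>UNIV. \<Sum>b\<in>UNIV. fA a c * fB b c / fC c) = (\<Sum>a\<in>UNIV. fA a c * (\<Sum>b\<in>UNIV. fB b c) / fC c)"
          by (simp add: sum_distrib_left sum_divide_distrib)
        also have "\<dots> = (\<Sum>a\<in>UNIV. fA a c) * (\<Sum>b\<in>UNIV. fB b c) / fC c"
          by (simp add: sum_distrib_right sum_divide_distrib)
        finally show "(\<Sum>a\<in>UNIV. \<Sum>b\<in>UNIV. fA a c * fB b c / fC c) = (\<Sum>a\<in>UNIV. fA a c) * (\<Sum>b\<in>UNIV. fB b c) / fC c" .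
      qed
      also have "\<dots> = fC c" by (simp add: sA sB)
      finally show ?thesis .
    qed
    then show ?thesis by (simp add: swap3)
  qed
  have sumf: "(\<Sum>a\<in>UNIV. \<Sum>b\<in>UNIV. \<Sum>c\<in>UNIV. f a b c) = (\<Sum>c\<in>UNIV. fC c)"
    unfolding fC_def by (simp add: swap3)
  have sumK: "(\<Sum>a\<in>UNIV. \<Sum>b\<in>UNIV. \<Sum>c\<in>UNIV. K a b c) = 0" using I IK by simp
  have sumd: "(\<Sum>a\<in>UNIV. \<Sum>b\<in>UNIV. \<Sum>c\<in>UNIV. d a b c) = 0"
    unfolding d_def by (simp add: sum_subtractf sumu sumf sumK)
  have u_nn: "u a b c \<ge> 0" for a b c unfolding u_def
    using fA_nn fB_nn fC_ge fA_nn by (meson divide_nonneg_nonneg mult_nonneg_nonneg order.trans)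
  have d_nn: "d a b c \<ge> 0" for a b c
  proof (cases "f a b c > 0")
    case True
    have "d a b c = f a b c * (t a b c - 1 - ln (t a b c))"
      unfolding d_def K_def using True ft[OF True, symmetric] by (simp add: algebra_simps)
    moreover have "t a b c - 1 - ln (t a b c) \<ge> 0" using ln_le_minus_one[OF tpos[OF True]] by simp
    ultimately show ?thesis using True by simp
  next
    case False
    then have "f a b c = 0" using nn[of a b c] by simp
    then show ?thesis unfolding d_def K_def using u_nn[of a b c] by simp
  qed
  have d0: "d a b c = 0"
  proof -
    have "\<forall>a\<in>UNIV. (\<Sum>b\<in>UNIV. \<Sum>c\<in>UNIV. d a b c) = 0"
      using sumd by (subst (asm) sum_nonneg_eq_0_iff) (auto intro!: sum_nonneg d_nn)
    then have "\<forall>b\<in>UNIV. (\<Sum>c\<in>UNIV. d a b c) = 0"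
      by (subst (asm) sum_nonneg_eq_0_iff) (auto intro!: sum_nonneg d_nn)
    then have "\<forall>c\<in>UNIV. d a b c = 0"
      by (subst (asm) sum_nonneg_eq_0_iff) (auto intro!: sum_nonneg d_nn)
    then show ?thesis by simp
  qed
  have "f a b c * fC c = fA a c * fB b c"
  proof (cases "f a b c > 0")
    case True
    have "d a b c = f a b c * (t a b c - 1 - ln (t a b c))"
      unfolding d_def K_def using True ft[OF True, symmetric] by (simp add: algebra_simps)
    then have "ln (t a b c) = t a b c - 1" using d0 True by simp
    then have "t a b c = 1" using ln_eq_minus_one tpos[OF True] by blast
    moreover have "fC c > 0" using True fA_ge[where a=a and b=b and c=c] fC_ge[where a=a and c=c] by linarith
    ultimately show ?thesis using True unfolding t_def by (simp add: field_simps)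
  next
    case False
    then have f0: "f a b c = 0" using nn[of a b c] by simp
    then have "u a b c = 0" using d0 unfolding d_def K_def by simp
    then have "fA a c * fB b c = 0 \<or> fC c = 0" unfolding u_def by simp
    moreover have "fC c = 0 \<Longrightarrow> fA a c = 0" using fC_ge[where a=a and c=c] fA_nn[of a c] by linarith
    ultimately show ?thesis using f0 by auto
  qed
  then show ?thesis unfolding fA_def fB_def fC_def .
qed


lemma sym_bip: "sym (bip_edges p)" unfolding sym_def bip_edges_def by auto

lemma comp_eq: "component p u = component p v \<longleftrightarrow> (u,v) \<in> (bip_edges p)\<^sup>*"
proof
  assume "component p u = component p v"
  moreover have "v \<in> component p v" unfolding component_def by simp
  ultimately show "(u,v) \<in> (bip_edges p)\<^sup>*" unfolding component_def by auto
next
  assume h: "(u,v) \<in> (bip_edges p)\<^sup>*"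
  have s: "(v,u) \<in> (bip_edges p)\<^sup>*" using h sym_rtrancl[OF sym_bip] unfolding sym_def by blast
  show "component p u = component p v" unfolding component_def using h s
    by (auto intro: rtrancl_trans)
qed

lemma edge1: "p (x,y) > 0 \<Longrightarrow> (Inl x, Inr y) \<in> bip_edges p" unfolding bip_edges_def by auto
lemma edge2: "p (x,y) > 0 \<Longrightarrow> (Inr y, Inl x) \<in> bip_edges p" unfolding bip_edges_def by auto

lemma conn: "p (x',y) > 0 \<Longrightarrow> p (x,y) > 0 \<Longrightarrow> component p (Inl x') = component p (Inl x)"
  unfolding comp_eq using edge1[of p x' y] edge2[of p x y]
  by (meson converse_rtrancl_into_rtrancl r_into_rtrancl)

lemma forward:
  fixes p :: "'x::finite \<times> 'y::finite \<Rightarrow> real"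
  assumes nn: "\<And>z. p z \<ge> 0" and sat: "saturable p"
  shows "(\<exists>(n::nat) (W :: 'x \<Rightarrow> 'y \<Rightarrow> nat \<Rightarrow> real).
       (\<forall>x y q. W x y q \<ge> 0) \<and> (\<forall>x y. (\<Sum>q<n. W x y q) = 1) \<and>
       (let r = (\<lambda>x y q. p (x, y) * W x y q) in
          markov_chain UNIV {..<n} UNIV (\<lambda>x q y. r x y q) \<and>
          markov_chain {..<n} UNIV UNIV (\<lambda>q x y. r x y q) \<and>
          markov_chain {..<n} UNIV UNIV (\<lambda>q y x. r x y q)))"
proof -
  let ?f = "joint_Qstar p"
  have CI: "?f a b c * (\<Sum>a'\<in>UNIV. \<Sum>b'\<in>UNIV. ?f a' b' c) = (\<Sum>b'\<in>UNIV. ?f a b' c) * (\<Sum>a'\<in>UNIV. ?f a' b c)" for a b c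
    by (rule cmi_zero_imp[OF _ sat[unfolded saturable_def]]) (simp add: joint_Qstar_def nn)
  define N where "N = card (UNIV :: ('x+'y) set set)"
  obtain h :: "('x+'y) set \<Rightarrow> nat" where h: "bij_betw h UNIV {0..<N}"
    unfolding N_def using ex_bij_betw_finite_nat[OF finite_UNIV] by blast
  define C where "C x = component p (Inl x)" for x
  define W :: "'x \<Rightarrow> 'y \<Rightarrow> nat \<Rightarrow> real" where "W x y q = (if q = h (C x) then 1 else 0)" for x y q
  have hlt: "h c < N" for c using h unfolding bij_betw_def by auto
  have hinj: "h c = h c' \<longleftrightarrow> c = c'" for c c' using h unfolding bij_betw_def inj_on_def by auto
  have hsurj: "q < N \<Longrightarrow> \<exists>c. q = h c" for q using h unfolding bij_betw_def by auto
  have Wsum: "(\<Sum>q<N. W x y q) = 1" for x y unfolding W_def by (simp add: hlt)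
  show ?thesis
  proof (intro exI[of _ N] exI[of _ W] conjI allI)
    show "W x y q \<ge> 0" for x y q unfolding W_def by simp
    show "(\<Sum>q<N. W x y q) = 1" for x y by (rule Wsum)
    show "let r = (\<lambda>x y q. p (x, y) * W x y q) in
          markov_chain UNIV {..<N} UNIV (\<lambda>x q y. r x y q) \<and>
          markov_chain {..<N} UNIV UNIV (\<lambda>q x y. r x y q) \<and>
          markov_chain {..<N} UNIV UNIV (\<lambda>q y x. r x y q)"
      unfolding Let_def markov_chain_def
    proof (intro conjI ballI)
      fix x q y assume "q \<in> {..<N}"
      then obtain c where qc: "q = h c" using hsurj by auto
      have rr: "p (x,y) * W x y (h c) = ?f x y c" for x y
        unfolding W_def joint_Qstar_def Qstar_def C_def by (auto simp: hinj)
      show "p (x, y) * W x y q * (\<Sum>a'\<in>UNIV. \<Sum>c'\<in>UNIV. p (a', c') * W a' c' q) =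
         (\<Sum>c'\<in>UNIV. p (x, c') * W x c' q) * (\<Sum>a'\<in>UNIV. p (a', y) * W a' y q)"
        unfolding qc rr by (rule CI)
    next
      fix q x y assume "q \<in> {..<N}"
      have s1: "(\<Sum>q'\<in>{..<N}. p (x,y') * W x y' q') = p (x,y')" for y'
        using Wsum[of x y'] by (simp add: sum_distrib_left[symmetric])
      have s2: "(\<Sum>q'\<in>{..<N}. \<Sum>y'\<in>UNIV. p (x,y') * W x y' q') = (\<Sum>y'\<in>UNIV. p (x,y'))"
        by (subst sum.swap) (simp add: s1)
      have s3: "(\<Sum>y'\<in>UNIV. p (x,y') * W x y' q) = (if q = h (C x) then (\<Sum>y'\<in>UNIV. p (x,y')) else 0)"
        by (simp add: W_def)
      show "p (x, y) * W x y q * (\<Sum>a'\<in>{..<N}. \<Sum>c'\<in>UNIV. p (x, c') * W x c' a') =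
         (\<Sum>c'\<in>UNIV. p (x, c') * W x c' q) * (\<Sum>a'\<in>{..<N}. p (x, y) * W x y a')"
        unfolding s1 s2 s3 by (simp add: W_def)
    next
      fix q y x assume "q \<in> {..<N}"
      have s1: "(\<Sum>q'\<in>{..<N}. p (x',y) * W x' y q') = p (x',y)" for x'
        using Wsum[of x' y] by (simp add: sum_distrib_left[symmetric])
      have s2: "(\<Sum>q'\<in>{..<N}. \<Sum>x'\<in>UNIV. p (x',y) * W x' y q') = (\<Sum>x'\<in>UNIV. p (x',y))"
        by (subst sum.swap) (simp add: s1)
      show "p (x, y) * W x y q * (\<Sum>a'\<in>{..<N}. \<Sum>c'\<in>UNIV. p (c', y) * W c' y a') =
         (\<Sum>c'\<in>UNIV. p (c', y) * W c' y q) * (\<Sum>a'\<in>{..<N}. p (x, y) * W x y a')"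
      proof (cases "p (x,y) > 0")
        case True
        have s3: "(\<Sum>x'\<in>UNIV. p (x',y) * W x' y q) = (\<Sum>x'\<in>UNIV. p (x',y) * W x y q)"
        proof (rule sum.cong[OF refl])
          fix x' show "p (x',y) * W x' y q = p (x',y) * W x y q"
          proof (cases "p (x',y) > 0")
            case True2: True
            then show ?thesis using conn[OF True2 True] unfolding W_def C_def by simp
          next
            case False then have "p (x',y) = 0" using nn[of "(x',y)"] by simp
            then show ?thesis by simp
          qed
        qed
        show ?thesis unfolding s1 s2 s3 by (simp add: sum_distrib_right[symmetric])
      next
        case False then have "p (x,y) = 0" using nn[of "(x,y)"] by simp
        then show ?thesis by simp
      qed
    qed
  qed
qed



lemma backward:
  fixes p :: "'x::finite \<times> 'y::finite \<Rightarrow> real" and W :: "'x \<Rightarrow> 'y \<Rightarrow> nat \<Rightarrow> real"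
  assumes nn: "\<And>z. p z \<ge> 0"
   and Wnn: "\<And>x y q. W x y q \<ge> 0" and Wsum: "\<And>x y. (\<Sum>q<n. W x y q) = 1"
   and M1: "\<And>x q y. q < n \<Longrightarrow> p (x,y) * W x y q * (\<Sum>x'\<in>UNIV. \<Sum>y'\<in>UNIV. p (x',y') * W x' y' q) = (\<Sum>y'\<in>UNIV. p (x,y') * W x y' q) * (\<Sum>x'\<in>UNIV. p (x',y) * W x' y q)"
   and M2: "\<And>q x y. q < n \<Longrightarrow> p (x,y) * W x y q * (\<Sum>q'\<in>{..<n}. \<Sum>y'\<in>UNIV. p (x,y') * W x y' q') = (\<Sum>y'\<in>UNIV. p (x,y') * W x y' q) * (\<Sum>q'\<in>{..<n}. p (x,y) * W x y q')"
   and M3: "\<And>q y x. q < n \<Longrightarrow> p (x,y) * W x y q * (\<Sum>q'\<in>{..<n}. \<Sum>x'\<in>UNIV. p (x',y) * W x' y q') = (\<Sum>x'\<in>UNIV. p (x',y) * W x' y q) * (\<Sum>q'\<in>{..<n}. p (x,y) * W x y q')"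
  shows "saturable p"
proof -
  define E where "E = (bip_edges p)\<^sup>*"
  have Etrans: "(u,v) \<in> E \<Longrightarrow> (v,w) \<in> E \<Longrightarrow> (u,w) \<in> E" for u v w unfolding E_def by (rule rtrancl_trans)
  have Erefl: "(u,u) \<in> E" for u unfolding E_def by simp
  have Ee1: "p (x,y) > 0 \<Longrightarrow> (Inl x, Inr y) \<in> E" for x y unfolding E_def using edge1[of p x y] by blast
  have Ee2: "p (x,y) > 0 \<Longrightarrow> (Inr y, Inl x) \<in> E" for x y unfolding E_def using edge2[of p x y] by blast
  define px where "px x = (\<Sum>y\<in>UNIV. p (x,y))" for x
  define py where "py y = (\<Sum>x\<in>UNIV. p (x,y))" for y
  define sX where "sX x q = (\<Sum>y'\<in>UNIV. p (x,y') * W x y' q)" for x q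
  define sY where "sY y q = (\<Sum>x'\<in>UNIV. p (x',y) * W x' y q)" for y q
  define A where "A x q = sX x q / px x" for x q
  define B where "B y q = sY y q / py y" for y q
  have pW1: "(\<Sum>q'\<in>{..<n}. p (x,y) * W x y q') = p (x,y)" for x y
    using Wsum[of x y] by (simp add: sum_distrib_left[symmetric])
  have pxge: "px x \<ge> p (x,y)" for x y unfolding px_def by (rule member_le_sum) (auto simp: nn)
  have pyge: "py y \<ge> p (x,y)" for x y unfolding py_def by (rule member_le_sum[where f="\<lambda>x. p (x,y)"]) (auto simp: nn)
  have aA: "W x y q = A x q" if "p (x,y) > 0" "q < n" for x y q
  proof -
    have s2: "(\<Sum>q'\<in>{..<n}. \<Sum>y'\<in>UNIV. p (x,y') * W x y' q') = px x"
      unfolding px_def by (subst sum.swap) (simp add: pW1)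
    have "p (x,y) * W x y q * px x = sX x q * p (x,y)"
      using M2[OF that(2), of x y] unfolding s2 pW1 sX_def .
    moreover have "px x > 0" using pxge[of x y] that by linarith
    ultimately show ?thesis unfolding A_def using that by (simp add: field_simps)
  qed
  have bB: "W x y q = B y q" if "p (x,y) > 0" "q < n" for x y q
  proof -
    have s2: "(\<Sum>q'\<in>{..<n}. \<Sum>x'\<in>UNIV. p (x',y) * W x' y q') = py y"
      unfolding py_def by (subst sum.swap) (simp add: pW1)
    have "p (x,y) * W x y q * py y = sY y q * p (x,y)"
      using M3[OF that(2), where x=x and y=y] unfolding s2 pW1 sY_def .
    moreover have "py y > 0" using pyge[of x y] that by linarith
    ultimately show ?thesis unfolding B_def using that by (simp add: field_simps)
  qed
  have sXA: "sX x q = px x * A x q" for x q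
  proof (cases "px x = 0")
    case True
    then have "\<forall>y\<in>UNIV. p (x,y) = 0" unfolding px_def by (subst (asm) sum_nonneg_eq_0_iff) (auto simp: nn)
    then show ?thesis unfolding sX_def using True by simp
  qed (simp add: A_def)
  have sYB: "sY y q = py y * B y q" for y q
  proof (cases "py y = 0")
    case True
    then have "\<forall>x\<in>UNIV. p (x,y) = 0" unfolding py_def by (subst (asm) sum_nonneg_eq_0_iff) (auto simp: nn)
    then show ?thesis unfolding sY_def using True by simp
  qed (simp add: B_def)
  define G where "G v q = (case v of Inl x \<Rightarrow> A x q | Inr y \<Rightarrow> B y q)" for v q
  have Gedge: "(u,v) \<in> bip_edges p \<Longrightarrow> q < n \<Longrightarrow> G u q = G v q" for u v q
    unfolding bip_edges_def G_def using aA bB by fastforce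
  have Gpath: "(u,v) \<in> E \<Longrightarrow> q < n \<Longrightarrow> G u q = G v q" for u v q
    unfolding E_def by (induction rule: rtrancl_induct) (auto dest: Gedge)
  define D where "D x = (\<Sum>x'\<in>UNIV. \<Sum>y'\<in>UNIV. if (Inl x, Inl x') \<in> E then p (x',y') else 0)" for x
  have key: "p (x,y) * D x = px x * py y" if pos: "p (x,y) > 0" for x y
  proof -
    have "\<exists>q<n. W x y q > 0"
    proof (rule ccontr)
      assume "\<not> (\<exists>q<n. W x y q > 0)"
      then have "\<forall>q<n. W x y q \<le> 0" by force
      then have "(\<Sum>q<n. W x y q) \<le> 0" by (intro sum_nonpos) auto
      then show False using Wsum[of x y] by simp
    qed
    then obtain q where q: "q < n" "W x y q > 0" by blast
    define g where "g = W x y q"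
    have gpos: "g > 0" using q g_def by simp
    have gA: "A x q = g" using aA[OF pos q(1)] g_def by simp
    define R where "R = (\<Sum>x'\<in>UNIV. \<Sum>y'\<in>UNIV. p (x',y') * W x' y' q)"
    have star: "p (x',y') * R = px x' * py y' * g"
      if ex: "(Inl x, Inl x') \<in> E" and ey: "(Inl x, Inr y') \<in> E" for x' y'
    proof -
      have Ax: "A x' q = g" using Gpath[OF ex q(1)] gA unfolding G_def by simp
      have By: "B y' q = g" using Gpath[OF ey q(1)] gA unfolding G_def by simp
      have pW: "p (x',y') * W x' y' q = p (x',y') * g"
      proof (cases "p (x',y') > 0")
        case True then show ?thesis using aA[OF True q(1)] Ax by simp
      next
        case False then have "p (x',y') = 0" using nn[of "(x',y')"] by simp
        then show ?thesis by simp
      qed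
      have "p (x',y') * g * R = (px x' * g) * (py y' * g)"
      proof -
        have e1: "(\<Sum>y''\<in>UNIV. p (x',y'') * W x' y'' q) = px x' * g" using sXA[of x' q] Ax unfolding sX_def by simp
        have e2: "(\<Sum>x''\<in>UNIV. p (x'',y') * W x'' y' q) = py y' * g" using sYB[of y' q] By unfolding sY_def by simp
        show ?thesis using M1[OF q(1), where x=x' and y=y'] unfolding e1 e2 pW R_def[symmetric] .
      qed
      then have "g * (p (x',y') * R) = g * (px x' * py y' * g)" by (simp add: algebra_simps)
      then show ?thesis using gpos by simp
    qed
    define D' where "D' = (\<Sum>x'\<in>UNIV. \<Sum>y'\<in>UNIV. if (Inl x, Inl x') \<in> E \<and> (Inl x, Inr y') \<in> E then p (x',y') else 0)"
    have c1: "(if (Inl x, Inl x') \<in> E then p (x',y') else 0) = (if (Inl x, Inl x') \<in> E \<and> (Inl x, Inr y') \<in> E then p (x',y') else 0)" for x' y'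
    proof (cases "p (x',y') > 0")
      case True then show ?thesis using Etrans[OF _ Ee1[OF True]] by auto
    next
      case False then have "p (x',y') = 0" using nn[of "(x',y')"] by simp
      then show ?thesis by simp
    qed
    have c2: "(if (Inl x, Inr y') \<in> E then p (x',y') else 0) = (if (Inl x, Inl x') \<in> E \<and> (Inl x, Inr y') \<in> E then p (x',y') else 0)" for x' y'
    proof (cases "p (x',y') > 0")
      case True then show ?thesis using Etrans[OF _ Ee2[OF True]] by auto
    next
      case False then have "p (x',y') = 0" using nn[of "(x',y')"] by simp
      then show ?thesis by simp
    qed
    have DD: "D x = D'" unfolding D_def D'_def
      by (intro sum.cong refl) (rule c1)
    have sx: "(\<Sum>x'\<in>UNIV. if (Inl x, Inl x') \<in> E then px x' else 0) = D'"
      unfolding D'_def px_def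
    proof (intro sum.cong refl)
      fix x' :: 'x
      have "(if (Inl x, Inl x') \<in> E then \<Sum>y'\<in>UNIV. p (x',y') else 0) = (\<Sum>y'\<in>UNIV. if (Inl x, Inl x') \<in> E then p (x',y') else 0)"
        by (cases "(Inl x, Inl x') \<in> E") simp_all
      also have "\<dots> = (\<Sum>y'\<in>UNIV. if (Inl x, Inl x') \<in> E \<and> (Inl x, Inr y') \<in> E then p (x',y') else 0)"
        by (intro sum.cong refl) (rule c1)
      finally show "(if (Inl x, Inl x') \<in> E then \<Sum>y'\<in>UNIV. p (x',y') else 0) = (\<Sum>y'\<in>UNIV. if (Inl x, Inl x') \<in> E \<and> (Inl x, Inr y') \<in> E then p (x',y') else 0)" .
    qed
    have sy: "(\<Sum>y'\<in>UNIV. if (Inl x, Inr y') \<in> E then py y' else 0) = D'"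
    proof -
      have "(\<Sum>y'\<in>UNIV. if (Inl x, Inr y') \<in> E then py y' else 0) =
            (\<Sum>y'\<in>UNIV. \<Sum>x'\<in>UNIV. if (Inl x, Inr y') \<in> E then p (x',y') else 0)"
        unfolding py_def by (intro sum.cong refl) simp
      also have "\<dots> = (\<Sum>x'\<in>UNIV. \<Sum>y'\<in>UNIV. if (Inl x, Inr y') \<in> E then p (x',y') else 0)"
        by (rule sum.swap)
      also have "\<dots> = D'" unfolding D'_def
        by (intro sum.cong refl) (rule c2)
      finally show ?thesis .
    qed
    have "D' * R = (\<Sum>x'\<in>UNIV. \<Sum>y'\<in>UNIV. if (Inl x, Inl x') \<in> E \<and> (Inl x, Inr y') \<in> E then p (x',y') * R else 0)"
      unfolding D'_def by (simp add: sum_distrib_right) (intro sum.cong refl, simp)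
    also have "\<dots> = (\<Sum>x'\<in>UNIV. \<Sum>y'\<in>UNIV. (if (Inl x, Inl x') \<in> E then px x' else 0) * (if (Inl x, Inr y') \<in> E then py y' else 0) * g)"
      by (intro sum.cong refl) (auto simp: star)
    also have "\<dots> = (\<Sum>x'\<in>UNIV. if (Inl x, Inl x') \<in> E then px x' else 0) * (\<Sum>y'\<in>UNIV. if (Inl x, Inr y') \<in> E then py y' else 0) * g"
      by (simp add: sum_distrib_right sum_distrib_left mult.assoc) (rule sum.swap)
    finally have DR: "D' * R = D' * D' * g" unfolding sx sy .
    have "D x \<ge> p (x,y)"
    proof -
      have "p (x,y) \<le> (\<Sum>y'\<in>UNIV. if (Inl x, Inl x) \<in> E then p (x,y') else 0)"
        using Erefl pxge[of x y] unfolding px_def by simp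
      also have "\<dots> \<le> D x" unfolding D_def
        by (rule member_le_sum[where f="\<lambda>x'. \<Sum>y'\<in>UNIV. if (Inl x, Inl x') \<in> E then p (x',y') else 0"])
           (auto intro!: sum_nonneg simp: nn)
      finally show ?thesis .
    qed
    then have Dpos: "D' > 0" using pos DD by simp
    have RgD: "R = g * D'" using DR Dpos by (simp add: algebra_simps)
    have "p (x,y) * R = px x * py y * g" using star[OF Erefl Ee1[OF pos]] .
    then have "g * (p (x,y) * D') = g * (px x * py y)" unfolding RgD by (simp add: algebra_simps)
    then show ?thesis using gpos DD by simp
  qed
  show ?thesis unfolding saturable_def
  proof (rule cmi_zero_if)
    fix a b c assume f: "joint_Qstar p a b c > 0"
    then have c: "c = component p (Inl a)" and pos: "p (a,b) > 0"
      unfolding joint_Qstar_def Qstar_def by (auto split: if_splits)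
    have cE: "(c = component p (Inl a')) = ((Inl a, Inl a') \<in> E)" for a'
      unfolding c comp_eq E_def ..
    have fC: "(\<Sum>a'\<in>UNIV. \<Sum>b'\<in>UNIV. joint_Qstar p a' b' c) = D a"
      unfolding D_def joint_Qstar_def Qstar_def cE ..
    have fA: "(\<Sum>b'\<in>UNIV. joint_Qstar p a b' c) = px a"
      unfolding joint_Qstar_def Qstar_def px_def c by simp
    have fB: "(\<Sum>a'\<in>UNIV. joint_Qstar p a' b c) = py b"
      unfolding joint_Qstar_def Qstar_def py_def
    proof (intro sum.cong refl)
      fix a' show "(if c = component p (Inl a') then p (a', b) else 0) = p (a', b)"
      proof (cases "p (a',b) > 0")
        case True then show ?thesis using conn[OF True pos] c by simp
      next
        case False then have "p (a',b) = 0" using nn[of "(a',b)"] by simp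
        then show ?thesis by simp
      qed
    qed
    have fv: "joint_Qstar p a b c = p (a,b)" unfolding joint_Qstar_def Qstar_def c by simp
    show "joint_Qstar p a b c * (\<Sum>a'\<in>UNIV. \<Sum>b'\<in>UNIV. joint_Qstar p a' b' c) =
        (\<Sum>b'\<in>UNIV. joint_Qstar p a b' c) * (\<Sum>a'\<in>UNIV. joint_Qstar p a' b c)"
      unfolding fC fA fB fv using key[OF pos] .
  qed
qed


theorem lemmaA1:
  fixes p :: "'x::finite \<times> 'y::finite \<Rightarrow> real"
  assumes "is_pmf p"
  shows "saturable p \<longleftrightarrow>
    (\<exists>(n::nat) (W :: 'x \<Rightarrow> 'y \<Rightarrow> nat \<Rightarrow> real).
       (\<forall>x y q. W x y q \<ge> 0) \<and> (\<forall>x y. (\<Sum>q<n. W x y q) = 1) \<and>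
       (let r = (\<lambda>x y q. p (x, y) * W x y q) in
          markov_chain UNIV {..<n} UNIV (\<lambda>x q y. r x y q) \<and>
          markov_chain {..<n} UNIV UNIV (\<lambda>q x y. r x y q) \<and>
          markov_chain {..<n} UNIV UNIV (\<lambda>q y x. r x y q)))"
proof -
  have nn: "\<And>z. p z \<ge> 0" using assms unfolding is_pmf_def by auto
  show ?thesis
  proof
    assume "saturable p"
    then show "\<exists>(n::nat) (W :: 'x \<Rightarrow> 'y \<Rightarrow> nat \<Rightarrow> real).
       (\<forall>x y q. W x y q \<ge> 0) \<and> (\<forall>x y. (\<Sum>q<n. W x y q) = 1) \<and>
       (let r = (\<lambda>x y q. p (x, y) * W x y q) in
          markov_chain UNIV {..<n} UNIV (\<lambda>x q y. r x y q) \<and>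
          markov_chain {..<n} UNIV UNIV (\<lambda>q x y. r x y q) \<and>
          markov_chain {..<n} UNIV UNIV (\<lambda>q y x. r x y q))"
      by (rule forward[OF nn])
  next
    assume "\<exists>(n::nat) (W :: 'x \<Rightarrow> 'y \<Rightarrow> nat \<Rightarrow> real).
       (\<forall>x y q. W x y q \<ge> 0) \<and> (\<forall>x y. (\<Sum>q<n. W x y q) = 1) \<and>
       (let r = (\<lambda>x y q. p (x, y) * W x y q) in
          markov_chain UNIV {..<n} UNIV (\<lambda>x q y. r x y q) \<and>
          markov_chain {..<n} UNIV UNIV (\<lambda>q x y. r x y q) \<and>
          markov_chain {..<n} UNIV UNIV (\<lambda>q y x. r x y q))"
    then obtain n and W :: "'x \<Rightarrow> 'y \<Rightarrow> nat \<Rightarrow> real" where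
      Wnn: "\<forall>x y q. W x y q \<ge> 0" and Ws: "\<forall>x y. (\<Sum>q<n. W x y q) = 1" and
      L: "let r = (\<lambda>x y q. p (x, y) * W x y q) in
          markov_chain UNIV {..<n} UNIV (\<lambda>x q y. r x y q) \<and>
          markov_chain {..<n} UNIV UNIV (\<lambda>q x y. r x y q) \<and>
          markov_chain {..<n} UNIV UNIV (\<lambda>q y x. r x y q)" by blast
    show "saturable p"
      by (rule backward[OF nn, where W=W and n=n])
         (use Wnn Ws L in \<open>auto simp: Let_def markov_chain_def\<close>)
  qed
qed

end
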